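(* Let $(I^*_{g^*},g^* )$ be a Stackelberg equilibrium and let $\pi^*_{g^*}=\Pi_{g^*}(I^*_{g^*}(X))$. Then the induced contract $(I^*_{g^*},\pi^*_{g^*})$ is individually rational and Pareto optimal, and moreover $\rho^{Pol}(I^*_{g^*},\pi^*_{g^*})=\rho^{Pol}(0,0)$.
   Context: $(\Omega,\mathcal F,\mathbb P)$ is a non-atomic probability space; $X\ge0$ is bounded with range $[0,M]$ and strictly increasing distribution function $F_X$. A distortion function is a non-decreasing differentiable map $h:[0,1]\to[0,1]$ with $h(0)=0$, $h(1)=1$; $\int Y\,\mathrm dh\circ\mathbb P=\int_0^\infty h(\mathbb P(Y\ge y))\mathrm dy+\int_{-\infty}^0[h(\mathbb P(Y\ge y))-1]\mathrm dy$. Policyholder distortion $T$, $\rho^{Pol}(Z)=\int Z\,\mathrm dT\circ\mathbb P$; pricing distortion $g$, $\Pi_g(I(X))=\int I(X)\,\mathrm dg\circ\mathbb P$. $\mathcal I_L=\{I:[0,M]\to[0,M]: I(0)=0,\ 0\le I(x_1)-I(x_2)\le x_1-x_2\ \forall x_2\le x_1\}$; for a mechanism, $\rho^{Pol}(I,g)=\rho^{Pol}(X-I(X)+\Pi_g(I(X)))$ and $V^{In}(I,g)=\Pi_g(I(X))-\mathbb E[I(X)]$. $(I^*,g^* )$ is a Stackelberg equilibrium if (i) $I^*\in\arg\min_{I\in\mathcal I_L}\rho^{Pol}(I,g^* )$ and (ii) $V^{In}(I^*,g^* )\ge V^{In}(I,g)$ for all $(I,g)$ with $I\in\arg\min_{\bar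 I\in\mathcal I_L}\rho^{Pol}(\bar I,g)$. For a contract $(I,\pi)\in\mathcal I_L\times\mathbb R$: $\rho^{Pol}(I,\pi)=\rho^{Pol}(X-I(X)+\pi)$, $V^{In}(I,\pi)=\pi-\mathbb E[I(X)]$. A contract $(I^*,\pi^* )$ is individually rational if $\rho^{Pol}(I^*,\pi^* )\le\rho^{Pol}(0,0)$ and $V^{In}(I^*,\pi^* )\ge V^{In}(0,0)$; it is Pareto optimal if no $(I,\pi)$ has $\rho^{Pol}(I,\pi)\le\rho^{Pol}(I^*,\pi^* )$ and $V^{In}(I,\pi)\ge V^{In}(I^*,\pi^* )$ with at least one strict inequality. *)

theory Defs
  imports "HOL-Probability.Probability"
begin

definition nonatomic :: "'a measure \<Rightarrow> bool" where
  "nonatomic M \<longleftrightarrow> (\<forall>A\<in>sets M. measure M A > 0 \<longrightarrow>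
      (\<exists>B\<in>sets M. B \<subseteq> A \<and> 0 < measure M B \<and> measure M B < measure M A))"

definition distortion :: "(real \<Rightarrow> real) \<Rightarrow> bool" where
  "distortion h \<longleftrightarrow> h ` {0..1} \<subseteq> {0..1} \<and> mono_on {0..1} h \<and>
      (\<forall>x\<in>{0..1}. h differentiable (at x within {0..1})) \<and> h 0 = 0 \<and> h 1 = 1"

definition choquet :: "'a measure \<Rightarrow> (real \<Rightarrow> real) \<Rightarrow> ('a \<Rightarrow> real) \<Rightarrow> real" where
  "choquet M h Y =
     (LBINT y:{0..}. h (measure M {\<omega>\<in>space M. Y \<omega> \<ge> y}))
   + (LBINT y:{..<0}. h (measure M {\<omega>\<in>space M. Y \<omega> \<ge> y}) - 1)"

definition indemnities :: "real \<Rightarrow> (real \<Rightarrow> real) set" where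
  "indemnities Mx = {I. I ` {0..Mx} \<subseteq> {0..Mx} \<and> I 0 = 0 \<and>
      (\<forall>x1\<in>{0..Mx}. \<forall>x2\<in>{0..Mx}. x2 \<le> x1 \<longrightarrow> 0 \<le> I x1 - I x2 \<and> I x1 - I x2 \<le> x1 - x2)}"

definition premium :: "'a measure \<Rightarrow> ('a \<Rightarrow> real) \<Rightarrow> (real \<Rightarrow> real) \<Rightarrow> (real \<Rightarrow> real) \<Rightarrow> real" where
  "premium M X g I = choquet M g (\<lambda>\<omega>. I (X \<omega>))"

text \<open>Mechanism (I,g): policyholder's risk and insurer's value.\<close>
definition rho_mech :: "'a measure \<Rightarrow> ('a \<Rightarrow> real) \<Rightarrow> (real \<Rightarrow> real) \<Rightarrow> (real \<Rightarrow> real) \<Rightarrow> (real \<Rightarrow> real) \<Rightarrow> real" where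
  "rho_mech M X T I g = choquet M T (\<lambda>\<omega>. X \<omega> - I (X \<omega>) + premium M X g I)"

definition V_mech :: "'a measure \<Rightarrow> ('a \<Rightarrow> real) \<Rightarrow> (real \<Rightarrow> real) \<Rightarrow> (real \<Rightarrow> real) \<Rightarrow> real" where
  "V_mech M X I g = premium M X g I - integral\<^sup>L M (\<lambda>\<omega>. I (X \<omega>))"

definition rho_contr :: "'a measure \<Rightarrow> ('a \<Rightarrow> real) \<Rightarrow> (real \<Rightarrow> real) \<Rightarrow> (real \<Rightarrow> real) \<Rightarrow> real \<Rightarrow> real" where
  "rho_contr M X T I p = choquet M T (\<lambda>\<omega>. X \<omega> - I (X \<omega>) + p)"

definition V_contr :: "'a measure \<Rightarrow> ('a \<Rightarrow> real) \<Rightarrow> (real \<Rightarrow> real) \<Rightarrow> real \<Rightarrow> real" where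
  "V_contr M X I p = p - integral\<^sup>L M (\<lambda>\<omega>. I (X \<omega>))"

definition best_response :: "'a measure \<Rightarrow> ('a \<Rightarrow> real) \<Rightarrow> real \<Rightarrow> (real \<Rightarrow> real) \<Rightarrow> (real \<Rightarrow> real) \<Rightarrow> (real \<Rightarrow> real) \<Rightarrow> bool" where
  "best_response M X Mx T g I \<longleftrightarrow> I \<in> indemnities Mx \<and>
     (\<forall>J\<in>indemnities Mx. rho_mech M X T I g \<le> rho_mech M X T J g)"

definition stackelberg :: "'a measure \<Rightarrow> ('a \<Rightarrow> real) \<Rightarrow> real \<Rightarrow> (real \<Rightarrow> real) \<Rightarrow> (real \<Rightarrow> real) \<Rightarrow> (real \<Rightarrow> real) \<Rightarrow> bool" where
  "stackelberg M X Mx T I g \<longleftrightarrow> distortion g \<and> best_response M X Mx T g I \<and>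
     (\<forall>J h. distortion h \<longrightarrow> best_response M X Mx T h J \<longrightarrow> V_mech M X J h \<le> V_mech M X I g)"

definition indiv_rational :: "'a measure \<Rightarrow> ('a \<Rightarrow> real) \<Rightarrow> (real \<Rightarrow> real) \<Rightarrow> (real \<Rightarrow> real) \<Rightarrow> real \<Rightarrow> bool" where
  "indiv_rational M X T I p \<longleftrightarrow>
     rho_contr M X T I p \<le> rho_contr M X T (\<lambda>_. 0) 0 \<and> V_contr M X I p \<ge> V_contr M X (\<lambda>_. 0) 0"

definition pareto_optimal :: "'a measure \<Rightarrow> ('a \<Rightarrow> real) \<Rightarrow> real \<Rightarrow> (real \<Rightarrow> real) \<Rightarrow> (real \<Rightarrow> real) \<Rightarrow> real \<Rightarrow> bool" where
  "pareto_optimal M X Mx T I p \<longleftrightarrow>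
     \<not> (\<exists>J\<in>indemnities Mx. \<exists>q::real.
          rho_contr M X T J q \<le> rho_contr M X T I p \<and> V_contr M X J q \<ge> V_contr M X I p \<and>
          (rho_contr M X T J q < rho_contr M X T I p \<or> V_contr M X J q > V_contr M X I p))"

end

theory Submission imports Defs begin

definition sfun :: "'a measure \<Rightarrow> ('a \<Rightarrow> real) \<Rightarrow> real \<Rightarrow> (real \<Rightarrow> real) \<Rightarrow> real \<Rightarrow> real" where
  "sfun M X Mx h t = Sup (insert 0 {x\<in>{0..Mx}. t < h (measure M {\<omega>\<in>space M. x \<le> X \<omega>})})"

context
  fixes M :: "'a measure" and X :: "'a \<Rightarrow> real" and Mx :: real and h :: "real \<Rightarrow> real"
  assumes P: "prob_space M" and Xm: "X \<in> borel_measurable M"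
    and Xb: "\<forall>\<omega>\<in>space M. 0 \<le> X \<omega> \<and> X \<omega> \<le> Mx" and Mx0: "0 \<le> Mx"
    and h01: "h ` {0..1} \<subseteq> {0..1}" and hm: "mono_on {0..1} h" and h0: "h 0 = 0" and h1: "h 1 = 1"
begin

lemma comp_meas:
  fixes f :: "real \<Rightarrow> real"
  assumes fm: "mono_on {0..Mx} f"
  shows "(\<lambda>\<omega>. f (X \<omega>)) \<in> borel_measurable M"
proof -
  define f' where "f' = (\<lambda>x. f (max 0 (min Mx x)))"
  have "mono f'" unfolding f'_def mono_def
    by (intro allI impI mono_onD[OF fm]) (use Mx0 in auto)
  then have "f' \<in> borel_measurable borel" by (rule borel_measurable_mono)
  then have "(\<lambda>\<omega>. f' (X \<omega>)) \<in> borel_measurable M" using Xm by measurable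
  moreover have "\<And>\<omega>. \<omega> \<in> space M \<Longrightarrow> f' (X \<omega>) = f (X \<omega>)"
  proof -
    fix \<omega> assume "\<omega> \<in> space M"
    then have "max 0 (min Mx (X \<omega>)) = X \<omega>" using Xb by auto
    then show "f' (X \<omega>) = f (X \<omega>)" unfolding f'_def by simp
  qed
  ultimately show ?thesis by (simp cong: measurable_cong)
qed

lemma meas01: "0 \<le> measure M A \<and> measure M A \<le> 1"
  using prob_space.prob_le_1[OF P] by simp

lemma h_range: "0 \<le> h (measure M A) \<and> h (measure M A) \<le> 1"
  using h01 meas01[of A] by (auto simp: image_subset_iff)

lemma h_mono_sets:
  assumes "A \<subseteq> B" "B \<in> sets M"
  shows "h (measure M A) \<le> h (measure M B)"
proof -
  interpret prob_space M by (rule P)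
  show ?thesis using meas01[of A] meas01[of B] finite_measure_mono[OF assms]
    by (intro mono_onD[OF hm]) auto
qed

lemma zero_in:
  assumes "t < 1"
  shows "0 \<in> {x\<in>{0..Mx}. t < h (measure M {\<omega>\<in>space M. x \<le> X \<omega>})}"
proof -
  have "{\<omega>\<in>space M. 0 \<le> X \<omega>} = space M" using Xb by auto
  then show ?thesis using assms Mx0 h1 prob_space.prob_space[OF P] by simp
qed

lemma sfun_range: "0 \<le> sfun M X Mx h t \<and> sfun M X Mx h t \<le> Mx"
  unfolding sfun_def
  by (intro conjI cSup_upper cSup_least bdd_aboveI[where M=Mx]) (auto simp: Mx0)

lemma sfun_antimono:
  assumes "t1 \<le> t2"
  shows "sfun M X Mx h t2 \<le> sfun M X Mx h t1"
  unfolding sfun_def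
  by (intro cSup_subset_mono bdd_aboveI[where M=Mx]) (use assms in \<open>auto simp: Mx0\<close>)

lemma char1:
  fixes f :: "real \<Rightarrow> real"
  assumes fm: "mono_on {0..Mx} f" and fl: "\<And>a b. 0 \<le> a \<Longrightarrow> a \<le> b \<Longrightarrow> b \<le> Mx \<Longrightarrow> f b - f a \<le> b - a"
    and t: "0 < t" "t < 1" and y: "y < f (sfun M X Mx h t)"
  shows "t < h (measure M {\<omega>\<in>space M. y \<le> f (X \<omega>)})"
proof -
  let ?A = "{x\<in>{0..Mx}. t < h (measure M {\<omega>\<in>space M. x \<le> X \<omega>})}"
  define s where "s = sfun M X Mx h t"
  have s01: "0 \<le> s" "s \<le> Mx" using sfun_range s_def by auto
  have sA: "s = Sup ?A" using zero_in[OF t(2)] unfolding s_def sfun_def by (simp add: insert_absorb)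
  have "s - (f s - y) < Sup ?A" using y sA s_def by simp
  then obtain x where x: "x \<in> ?A" "s - (f s - y) < x" using less_cSupE zero_in[OF t(2)] by blast
  have xs: "x \<le> s" using x(1) sA by (auto intro!: cSup_upper bdd_aboveI[where M=Mx])
  have "f s - f x \<le> s - x" using fl x(1) xs s01 by auto
  hence fx: "y < f x" using x(2) by linarith
  have sub: "{\<omega>\<in>space M. x \<le> X \<omega>} \<subseteq> {\<omega>\<in>space M. y \<le> f (X \<omega>)}"
  proof safe
    fix \<omega> assume "\<omega>\<in>space M" "x \<le> X \<omega>"
    then have "f x \<le> f (X \<omega>)" using Xb x(1) by (intro mono_onD[OF fm]) auto
    thus "y \<le> f (X \<omega>)" using fx by simp
  qed
  have [measurable]: "(\<lambda>\<omega>. f (X \<omega>)) \<in> borel_measurable M" by (rule comp_meas[OF fm])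
  have meas: "{\<omega>\<in>space M. y \<le> f (X \<omega>)} \<in> sets M" by measurable
  show ?thesis using h_mono_sets[OF sub meas] x(1) by simp
qed

lemma char2:
  fixes f :: "real \<Rightarrow> real"
  assumes fm: "mono_on {0..Mx} f" and fl: "\<And>a b. 0 \<le> a \<Longrightarrow> a \<le> b \<Longrightarrow> b \<le> Mx \<Longrightarrow> f b - f a \<le> b - a"
    and t: "0 < t" "t < 1" and lt: "t < h (measure M {\<omega>\<in>space M. y \<le> f (X \<omega>)})"
  shows "y \<le> f (sfun M X Mx h t)"
proof (cases "y \<le> f Mx")
  case False
  have "{\<omega>\<in>space M. y \<le> f (X \<omega>)} = {}"
  proof safe
    fix \<omega> assume "\<omega>\<in>space M" "y \<le> f (X \<omega>)"
    moreover have "f (X \<omega>) \<le> f Mx" using Xb \<open>\<omega>\<in>space M\<close> Mx0 by (intro mono_onD[OF fm]) auto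
    ultimately show "\<omega> \<in> {}" using False by simp
  qed
  then have "h (measure M {\<omega>\<in>space M. y \<le> f (X \<omega>)}) = 0" using h0 by (simp only:) simp
  then show ?thesis using lt t by simp
next
  case True
  define B where "B = {x\<in>{0..Mx}. y \<le> f x}"
  have B: "Mx \<in> B" using True Mx0 by (simp add: B_def)
  define m where "m = Inf B"
  have bdd: "bdd_below B" by (intro bdd_belowI[where m=0]) (auto simp: B_def)
  have m0: "0 \<le> m" using B by (auto simp: m_def B_def intro!: cInf_greatest)
  have m1: "m \<le> Mx" using B bdd by (auto simp: m_def intro: cInf_lower)
  have fm_y: "y \<le> f m"
  proof (rule ccontr)
    assume "\<not> y \<le> f m"
    then have "Inf B < m + (y - f m)" by (simp add: m_def)
    then obtain x where x: "x \<in> B" "x < m + (y - f m)" using cInf_lessD B by blast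
    have "m \<le> x" using x(1) bdd by (simp add: m_def cInf_lower)
    then have "f x - f m \<le> x - m" using fl m0 x(1) by (auto simp: B_def)
    then show False using x by (auto simp: B_def)
  qed
  have eq: "{\<omega>\<in>space M. y \<le> f (X \<omega>)} = {\<omega>\<in>space M. m \<le> X \<omega>}"
  proof safe
    fix \<omega> assume "\<omega> \<in> space M" "y \<le> f (X \<omega>)"
    then have "X \<omega> \<in> B" using Xb by (auto simp: B_def)
    then show "m \<le> X \<omega>" using bdd by (simp add: m_def cInf_lower)
  next
    fix \<omega> assume "\<omega> \<in> space M" "m \<le> X \<omega>"
    then have "f m \<le> f (X \<omega>)" using Xb m0 m1 by (intro mono_onD[OF fm]) auto
    then show "y \<le> f (X \<omega>)" using fm_y by simp
  qed
  have "m \<in> {x\<in>{0..Mx}. t < h (measure M {\<omega>\<in>space M. x \<le> X \<omega>})}" using lt eq m0 m1 by simp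
  then have "m \<le> sfun M X Mx h t" unfolding sfun_def
    by (intro cSup_upper bdd_aboveI[where M=Mx]) (auto simp: Mx0)
  then have "f m \<le> f (sfun M X Mx h t)" using m0 m1 sfun_range by (intro mono_onD[OF fm]) auto
  thus ?thesis using fm_y by simp
qed

lemma choquet_repr:
  fixes f :: "real \<Rightarrow> real"
  assumes fm: "mono_on {0..Mx} f" and fl: "\<And>a b. 0 \<le> a \<Longrightarrow> a \<le> b \<Longrightarrow> b \<le> Mx \<Longrightarrow> f b - f a \<le> b - a"
  shows "set_integrable lborel {0<..<1} (\<lambda>t. f (sfun M X Mx h t))"
    and "choquet M h (\<lambda>\<omega>. f (X \<omega>)) = (LBINT t:{0<..<1}. f (sfun M X Mx h t))"
proof -
  define G where "G y = h (measure M {\<omega>\<in>space M. y \<le> f (X \<omega>)})" for y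
  define r where "r t = f (sfun M X Mx h t)" for t
  have fXm[measurable]: "(\<lambda>\<omega>. f (X \<omega>)) \<in> borel_measurable M" by (rule comp_meas[OF fm])
  have Gr: "0 \<le> G y \<and> G y \<le> 1" for y unfolding G_def by (rule h_range)
  have Gmono: "G y2 \<le> G y1" if "y1 \<le> y2" for y1 y2
    unfolding G_def by (rule h_mono_sets) (use that in auto)
  have "(\<lambda>y. - G y) \<in> borel_measurable borel"
    by (rule borel_measurable_mono) (auto simp: mono_def Gmono)
  then have "(\<lambda>y. - (- G y)) \<in> borel_measurable borel" by measurable
  then have Gm[measurable]: "G \<in> borel_measurable borel" by simp
  have rb: "f 0 \<le> r t \<and> r t \<le> f 0 + Mx" for t
  proof -
    have s: "0 \<le> sfun M X Mx h t" "sfun M X Mx h t \<le> Mx" using sfun_range by auto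
    have "f 0 \<le> r t" unfolding r_def using s by (intro mono_onD[OF fm]) auto
    moreover have "r t \<le> f Mx" unfolding r_def using s Mx0 by (intro mono_onD[OF fm]) auto
    moreover have "f Mx - f 0 \<le> Mx - 0" using fl[of 0 Mx] Mx0 by simp
    ultimately show ?thesis by simp
  qed
  have "(\<lambda>t. - r t) \<in> borel_measurable borel"
  proof (rule borel_measurable_mono, unfold mono_def, intro allI impI)
    fix t1 t2 :: real assume "t1 \<le> t2"
    then have "sfun M X Mx h t2 \<le> sfun M X Mx h t1" by (rule sfun_antimono)
    then have "r t2 \<le> r t1" unfolding r_def using sfun_range by (intro mono_onD[OF fm]) auto
    then show "- r t1 \<le> - r t2" by simp
  qed
  then have "(\<lambda>t. - (- r t)) \<in> borel_measurable borel" by measurable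
  then have rm[measurable]: "r \<in> borel_measurable borel" by simp
  have c1: "t < G y" if "0 < t" "t < 1" "y < r t" for t y
    unfolding G_def using char1[OF fm fl that[unfolded r_def]] .
  have c2: "y \<le> r t" if "0 < t" "t < 1" "t < G y" for t y
    unfolding r_def using char2[OF fm fl that[unfolded G_def]] .
  have si: "set_integrable lborel {0<..<1} g" if [measurable]: "g \<in> borel_measurable borel"
     and gb: "\<And>t. \<bar>g t\<bar> \<le> B" for g :: "real \<Rightarrow> real" and B
    unfolding set_integrable_def
    by (rule integrableI_bounded_set_indicator[where B=B]) (use gb in auto)
  show "set_integrable lborel {0<..<1} (\<lambda>t. f (sfun M X Mx h t))"
    using si[OF rm, of "\<bar>f 0\<bar> + Mx"] rb unfolding r_def by (smt (verit))
  show "choquet M h (\<lambda>\<omega>. f (X \<omega>)) = (LBINT t:{0<..<1}. f (sfun M X Mx h t))"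
  proof -
    define E where "E = {p::real\<times>real. 0 \<le> fst p \<and> 0 < snd p \<and> snd p < 1 \<and> snd p < G (fst p)}"
    have "Measurable.pred (borel \<Otimes>\<^sub>M borel) (\<lambda>p::real\<times>real. 0 \<le> fst p \<and> 0 < snd p \<and> snd p < 1 \<and> snd p < G (fst p))"
      by measurable
    then have Em: "E \<in> sets (lborel \<Otimes>\<^sub>M lborel)" by (simp add: Measurable.pred_def space_pair_measure E_def)
    have "(LBINT y:{0..}. G y) = enn2real (\<integral>\<^sup>+ y. ennreal (indicator {0..} y *\<^sub>R G y) \<partial>lborel)"
      unfolding set_lebesgue_integral_def by (rule integral_eq_nn_integral) (use Gr in \<open>auto simp: indicator_def\<close>)
    also have "(\<integral>\<^sup>+ y. ennreal (indicator {0..} y *\<^sub>R G y) \<partial>lborel) = (\<integral>\<^sup>+ y. emeasure lborel (Pair y -` E) \<partial>lborel)"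
    proof (rule nn_integral_cong)
      fix y :: real
      show "ennreal (indicator {0..} y *\<^sub>R G y) = emeasure lborel (Pair y -` E)"
      proof (cases "0 \<le> y")
        case True
        then have "Pair y -` E = {0<..<G y}" using Gr[of y] by (auto simp: E_def)
        then show ?thesis using True Gr[of y] by simp
      next
        case False
        then have "Pair y -` E = {}" by (auto simp: E_def)
        then show ?thesis using False by simp
      qed
    qed
    also have "\<dots> = emeasure (lborel \<Otimes>\<^sub>M lborel) E" by (rule lborel.emeasure_pair_measure_alt[symmetric, OF Em])
    also have "\<dots> = (\<integral>\<^sup>+ t. emeasure lborel ((\<lambda>y. (y, t)) -` E) \<partial>lborel)" by (rule lborel_pair.emeasure_pair_measure_alt2[OF Em])
    also have "\<dots> = (\<integral>\<^sup>+ t. ennreal (indicator {0<..<1} t *\<^sub>R max 0 (r t)) \<partial>lborel)"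
    proof (rule nn_integral_cong)
      fix t :: real
      show "emeasure lborel ((\<lambda>y. (y, t)) -` E) = ennreal (indicator {0<..<1} t *\<^sub>R max 0 (r t))"
      proof (cases "0 < t \<and> t < 1")
        case False
        then have "(\<lambda>y. (y, t)) -` E = {}" by (auto simp: E_def)
        then show ?thesis using False by (simp add: indicator_def)
      next
        case True
        have eq: "(\<lambda>y. (y, t)) -` E = {y. 0 \<le> y \<and> t < G y}" using True by (auto simp: E_def)
        have "Measurable.pred borel (\<lambda>y::real. 0 \<le> y \<and> t < G y)" by measurable
        then have Qm: "{y. 0 \<le> y \<and> t < G y} \<in> sets lborel" by (simp add: Measurable.pred_def)
        have up: "{y. 0 \<le> y \<and> t < G y} \<subseteq> {0..r t}" using c2 True by auto
        show ?thesis
        proof (cases "0 \<le> r t")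
          case False
          then have e: "{y. 0 \<le> y \<and> t < G y} = {}" using up by auto
          show ?thesis using False True by (simp only: eq e) simp
        next
          case r0: True
          have lo: "{0..<r t} \<subseteq> {y. 0 \<le> y \<and> t < G y}" using c1 True by auto
          have "emeasure lborel {0..<r t} \<le> emeasure lborel {y. 0 \<le> y \<and> t < G y}"
            by (rule emeasure_mono[OF lo Qm])
          moreover have "emeasure lborel {y. 0 \<le> y \<and> t < G y} \<le> emeasure lborel {0..r t}"
            by (rule emeasure_mono[OF up]) simp
          ultimately have "emeasure lborel {y. 0 \<le> y \<and> t < G y} = ennreal (r t)"
            using r0 by (intro antisym) auto
          then show ?thesis using eq True r0 by simp
        qed
      qed
    qed
    also have "enn2real \<dots> = (LBINT t:{0<..<1}. max 0 (r t))"
      unfolding set_lebesgue_integral_def by (rule integral_eq_nn_integral[symmetric]) (auto simp: indicator_def)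
    finally have pos: "(LBINT y:{0..}. G y) = (LBINT t:{0<..<1}. max 0 (r t))" .

    define E2 where "E2 = {p::real\<times>real. fst p < 0 \<and> 0 < snd p \<and> snd p < 1 \<and> G (fst p) \<le> snd p}"
    have "Measurable.pred (borel \<Otimes>\<^sub>M borel) (\<lambda>p::real\<times>real. fst p < 0 \<and> 0 < snd p \<and> snd p < 1 \<and> G (fst p) \<le> snd p)"
      by measurable
    then have E2m: "E2 \<in> sets (lborel \<Otimes>\<^sub>M lborel)" by (simp add: Measurable.pred_def space_pair_measure E2_def)
    have "(LBINT y:{..<0}. G y - 1) = - (LBINT y:{..<0}. 1 - G y)"
    proof -
      have "(\<lambda>y. indicator {..<0} y *\<^sub>R (G y - 1)) = (\<lambda>y. - (indicator {..<0} y *\<^sub>R (1 - G y)))"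
        by (auto simp: fun_eq_iff split: split_indicator)
      then show ?thesis unfolding set_lebesgue_integral_def by (simp only: integral_minus)
    qed
    also have "(LBINT y:{..<0}. 1 - G y) = enn2real (\<integral>\<^sup>+ y. ennreal (indicator {..<0} y *\<^sub>R (1 - G y)) \<partial>lborel)"
      unfolding set_lebesgue_integral_def by (rule integral_eq_nn_integral) (use Gr in \<open>auto simp: indicator_def\<close>)
    also have "(\<integral>\<^sup>+ y. ennreal (indicator {..<0} y *\<^sub>R (1 - G y)) \<partial>lborel) = (\<integral>\<^sup>+ y. emeasure lborel (Pair y -` E2) \<partial>lborel)"
    proof (rule nn_integral_cong)
      fix y :: real
      show "ennreal (indicator {..<0} y *\<^sub>R (1 - G y)) = emeasure lborel (Pair y -` E2)"
      proof (cases "y < 0")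
        case True
        have eq: "Pair y -` E2 = {t. 0 < t \<and> t < 1 \<and> G y \<le> t}" using True by (auto simp: E2_def)
        have "Measurable.pred borel (\<lambda>t::real. 0 < t \<and> t < 1 \<and> G y \<le> t)" by measurable
        then have Qm: "{t. 0 < t \<and> t < 1 \<and> G y \<le> t} \<in> sets lborel" by (simp add: Measurable.pred_def)
        have lo: "{G y<..<1} \<subseteq> {t. 0 < t \<and> t < 1 \<and> G y \<le> t}" using Gr[of y] by auto
        have up: "{t. 0 < t \<and> t < 1 \<and> G y \<le> t} \<subseteq> {G y..1}" by auto
        have "emeasure lborel {G y<..<1} \<le> emeasure lborel {t. 0 < t \<and> t < 1 \<and> G y \<le> t}"
          by (rule emeasure_mono[OF lo Qm])
        moreover have "emeasure lborel {t. 0 < t \<and> t < 1 \<and> G y \<le> t} \<le> emeasure lborel {G y..1}"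
          by (rule emeasure_mono[OF up]) simp
        ultimately have "emeasure lborel {t. 0 < t \<and> t < 1 \<and> G y \<le> t} = ennreal (1 - G y)"
          using Gr[of y] by (intro antisym) auto
        then show ?thesis using eq True by simp
      next
        case False
        then have "Pair y -` E2 = {}" by (auto simp: E2_def)
        then show ?thesis using False by simp
      qed
    qed
    also have "\<dots> = emeasure (lborel \<Otimes>\<^sub>M lborel) E2" by (rule lborel.emeasure_pair_measure_alt[symmetric, OF E2m])
    also have "\<dots> = (\<integral>\<^sup>+ t. emeasure lborel ((\<lambda>y. (y, t)) -` E2) \<partial>lborel)" by (rule lborel_pair.emeasure_pair_measure_alt2[OF E2m])
    also have "\<dots> = (\<integral>\<^sup>+ t. ennreal (indicator {0<..<1} t *\<^sub>R max 0 (- r t)) \<partial>lborel)"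
    proof (rule nn_integral_cong)
      fix t :: real
      show "emeasure lborel ((\<lambda>y. (y, t)) -` E2) = ennreal (indicator {0<..<1} t *\<^sub>R max 0 (- r t))"
      proof (cases "0 < t \<and> t < 1")
        case False
        then have "(\<lambda>y. (y, t)) -` E2 = {}" by (auto simp: E2_def)
        then show ?thesis using False by (simp add: indicator_def)
      next
        case True
        have eq: "(\<lambda>y. (y, t)) -` E2 = {y. y < 0 \<and> G y \<le> t}" using True by (auto simp: E2_def)
        have "Measurable.pred borel (\<lambda>y::real. y < 0 \<and> G y \<le> t)" by measurable
        then have Qm: "{y. y < 0 \<and> G y \<le> t} \<in> sets lborel" by (simp add: Measurable.pred_def)
        have up: "{y. y < 0 \<and> G y \<le> t} \<subseteq> {r t..0}"
        proof safe
          fix y assume "y < 0" "G y \<le> t"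
          then show "y \<in> {r t..0}" using c1[of t y] True by (cases "y < r t") auto
        qed
        show ?thesis
        proof (cases "r t < 0")
          case False
          then have e: "{y. y < 0 \<and> G y \<le> t} = {}" using up by auto
          show ?thesis using False True by (simp only: eq e) simp
        next
          case r0: True
          have lo: "{r t<..<0} \<subseteq> {y. y < 0 \<and> G y \<le> t}"
          proof safe
            fix y assume "y \<in> {r t<..<0}"
            then show "y < 0" "G y \<le> t" using c2[of t y] True by (auto simp: not_less[symmetric])
          qed
          have "emeasure lborel {r t<..<0} \<le> emeasure lborel {y. y < 0 \<and> G y \<le> t}"
            by (rule emeasure_mono[OF lo Qm])
          moreover have "emeasure lborel {y. y < 0 \<and> G y \<le> t} \<le> emeasure lborel {r t..0}"
            by (rule emeasure_mono[OF up]) simp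
          ultimately have "emeasure lborel {y. y < 0 \<and> G y \<le> t} = ennreal (- r t)"
            using r0 by (intro antisym) auto
          then show ?thesis using eq True r0 by simp
        qed
      qed
    qed
    also have "enn2real \<dots> = (LBINT t:{0<..<1}. max 0 (- r t))"
      unfolding set_lebesgue_integral_def by (rule integral_eq_nn_integral[symmetric]) (auto simp: indicator_def)
    finally have neg: "(LBINT y:{..<0}. G y - 1) = - (LBINT t:{0<..<1}. max 0 (- r t))" .

    have b1: "\<bar>max 0 (r t)\<bar> \<le> \<bar>f 0\<bar> + Mx" "\<bar>max 0 (- r t)\<bar> \<le> \<bar>f 0\<bar> + Mx" for t
      using rb[of t] Mx0 by (auto simp: abs_if max_def)
    have i1: "set_integrable lborel {0<..<1} (\<lambda>t. max 0 (r t))"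
      by (rule si[of _ "\<bar>f 0\<bar> + Mx"]) (use b1 in auto)
    have i2: "set_integrable lborel {0<..<1} (\<lambda>t. max 0 (- r t))"
      by (rule si[of _ "\<bar>f 0\<bar> + Mx"]) (use b1 in auto)
    have "choquet M h (\<lambda>\<omega>. f (X \<omega>)) = (LBINT y:{0..}. G y) + (LBINT y:{..<0}. G y - 1)"
      unfolding choquet_def G_def by simp
    also have "\<dots> = (LBINT t:{0<..<1}. max 0 (r t)) - (LBINT t:{0<..<1}. max 0 (- r t))"
      using pos neg by simp
    also have "\<dots> = (LBINT t:{0<..<1}. max 0 (r t) - max 0 (- r t))"
      by (rule set_integral_diff(2)[OF i1 i2, symmetric])
    also have "\<dots> = (LBINT t:{0<..<1}. r t)"
      by (rule arg_cong[where f="set_lebesgue_integral lborel {0<..<1}"]) (auto simp: fun_eq_iff max_def)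
    finally show ?thesis unfolding r_def .
  qed
qed

lemma choquet_zero: "choquet M h (\<lambda>\<omega>. 0) = 0"
  using choquet_repr(2)[of "\<lambda>_. 0"] by (simp add: mono_on_def)

lemma key:
  assumes J: "J \<in> indemnities Mx"
  shows "choquet M h (\<lambda>\<omega>. X \<omega> - J (X \<omega>) + c) = choquet M h X - choquet M h (\<lambda>\<omega>. J (X \<omega>)) + c"
proof -
  have Jl: "0 \<le> J b - J a \<and> J b - J a \<le> b - a" if "0 \<le> a" "a \<le> b" "b \<le> Mx" for a b
    using J that unfolding indemnities_def by auto
  have m1: "mono_on {0..Mx} (\<lambda>x. x - J x + c)"
  proof (rule mono_onI)
    fix r s assume "r \<in> {0..Mx}" "s \<in> {0..Mx}" "r \<le> s"
    then show "r - J r + c \<le> s - J s + c" using Jl[of r s] by auto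
  qed
  have l1: "(b - J b + c) - (a - J a + c) \<le> b - a" if "0 \<le> a" "a \<le> b" "b \<le> Mx" for a b
    using Jl[OF that] by simp
  have m2: "mono_on {0..Mx} J" by (rule mono_onI) (use Jl in force)
  have l2: "J b - J a \<le> b - a" if "0 \<le> a" "a \<le> b" "b \<le> Mx" for a b using Jl[OF that] by simp
  have m3: "mono_on {0..Mx} (\<lambda>x. x)" by (rule mono_onI) auto
  let ?s = "sfun M X Mx h"
  have i3: "set_integrable lborel {0<..<1} (\<lambda>t. ?s t)" using choquet_repr(1)[OF m3] by simp
  have i2: "set_integrable lborel {0<..<1} (\<lambda>t. J (?s t))" using choquet_repr(1)[OF m2 l2] by simp
  have ic: "set_integrable lborel {0<..<1::real} (\<lambda>t. c)"
    unfolding set_integrable_def by (rule integrableI_bounded_set_indicator[where B="\<bar>c\<bar>"]) (auto simp: ennreal_less_top)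
  have c3: "choquet M h X = (LBINT t:{0<..<1}. ?s t)" using choquet_repr(2)[OF m3] by simp
  have c2: "choquet M h (\<lambda>\<omega>. J (X \<omega>)) = (LBINT t:{0<..<1}. J (?s t))" using choquet_repr(2)[OF m2 l2] by simp
  have "choquet M h (\<lambda>\<omega>. X \<omega> - J (X \<omega>) + c) = (LBINT t:{0<..<1}. ?s t - J (?s t) + c)"
    using choquet_repr(2)[OF m1 l1] by simp
  also have "\<dots> = (LBINT t:{0<..<1}. ?s t - J (?s t)) + (LBINT t:{0<..<1::real}. c)"
    using set_integral_add(2)[OF set_integral_diff(1)[OF i3 i2] ic] by simp
  also have "(LBINT t:{0<..<1}. ?s t - J (?s t)) = (LBINT t:{0<..<1}. ?s t) - (LBINT t:{0<..<1}. J (?s t))"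
    by (rule set_integral_diff(2)[OF i3 i2])
  also have "(LBINT t:{0<..<1::real}. c) = c" by (subst set_integral_const) auto
  finally show ?thesis using c2 c3 by simp
qed

end

theorem proposition2:
  fixes M :: "'a measure" and X :: "'a \<Rightarrow> real" and Mx :: real
    and T g :: "real \<Rightarrow> real" and I :: "real \<Rightarrow> real"
  assumes "prob_space M" and "nonatomic M"
    and "0 < Mx" and "X \<in> borel_measurable M"
    and "\<forall>\<omega>\<in>space M. 0 \<le> X \<omega> \<and> X \<omega> \<le> Mx"
    and "strict_mono_on {0..Mx} (\<lambda>x. measure M {\<omega>\<in>space M. X \<omega> \<le> x})"
    and "distortion T"
    and "stackelberg M X Mx T I g"
  shows "indiv_rational M X T I (premium M X g I)
    \<and> pareto_optimal M X Mx T I (premium M X g I)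
    \<and> rho_contr M X T I (premium M X g I) = rho_contr M X T (\<lambda>_. 0) 0"
proof -
  have Mx0: "0 \<le> Mx" using assms(3) by simp
  have dT: "T ` {0..1} \<subseteq> {0..1}" "mono_on {0..1} T" "T 0 = 0" "T 1 = 1"
    using assms(7) unfolding distortion_def by auto
  have sg: "distortion g" "best_response M X Mx T g I"
    "\<And>J h. distortion h \<Longrightarrow> best_response M X Mx T h J \<Longrightarrow> V_mech M X J h \<le> V_mech M X I g"
    using assms(8) unfolding stackelberg_def by auto
  have dg: "g ` {0..1} \<subseteq> {0..1}" "mono_on {0..1} g" "g 0 = 0" "g 1 = 1"
    using sg(1) unfolding distortion_def by auto
  have Iind: "I \<in> indemnities Mx" and Iopt: "\<And>J. J \<in> indemnities Mx \<Longrightarrow> rho_mech M X T I g \<le> rho_mech M X T J g"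
    using sg(2) unfolding best_response_def by auto
  note KT = key[OF assms(1,4,5) Mx0 dT]
  note ZT = choquet_zero[OF assms(1,4,5) Mx0 dT]
  note Zg = choquet_zero[OF assms(1,4,5) Mx0 dg]
  have zind: "(\<lambda>_. 0) \<in> indemnities Mx" using Mx0 by (auto simp: indemnities_def)
  define S where "S = choquet M T X"
  define p where "p = premium M X g I"
  define CT where "CT J = choquet M T (\<lambda>\<omega>. J (X \<omega>))" for J
  have rc: "rho_contr M X T J q = S - CT J + q" if "J \<in> indemnities Mx" for J q
    unfolding rho_contr_def S_def CT_def using KT[OF that] .
  have r00: "rho_contr M X T (\<lambda>_. 0) 0 = S" using rc[OF zind, of 0] ZT by (simp add: CT_def)
  have r0g: "rho_mech M X T (\<lambda>_. 0) g = S"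
    using r00 Zg unfolding rho_mech_def rho_contr_def premium_def by simp
  have r1g: "rho_mech M X T I g = S - CT I + p"
    using rc[OF Iind, of p] unfolding rho_mech_def rho_contr_def p_def .
  have brT: "best_response M X Mx T T J" if J: "J \<in> indemnities Mx" for J
  proof -
    have "rho_mech M X T K T = S" if "K \<in> indemnities Mx" for K
      using rc[OF that, of "premium M X T K"] unfolding rho_mech_def rho_contr_def premium_def CT_def by simp
    then show ?thesis unfolding best_response_def using J by auto
  qed
  have lead: "CT J - integral\<^sup>L M (\<lambda>\<omega>. J (X \<omega>)) \<le> p - integral\<^sup>L M (\<lambda>\<omega>. I (X \<omega>))"
    if "J \<in> indemnities Mx" for J
    using sg(3)[OF assms(7) brT[OF that]] unfolding V_mech_def premium_def CT_def p_def .
  have "p \<le> CT I" using Iopt[OF zind] r0g r1g by simp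
  moreover have "CT I \<le> p" using lead[OF Iind] by simp
  ultimately have pe: "p = CT I" by simp
  have rI: "rho_contr M X T I p = S" using rc[OF Iind, of p] pe by simp
  have IR: "indiv_rational M X T I p"
    unfolding indiv_rational_def using rI r00 lead[OF zind] ZT
    by (simp add: V_contr_def CT_def)
  have PO: "pareto_optimal M X Mx T I p"
    unfolding pareto_optimal_def
  proof (rule notI, elim bexE exE conjE)
    fix J q assume J: "J \<in> indemnities Mx"
      and h1: "rho_contr M X T J q \<le> rho_contr M X T I p"
      and h2: "V_contr M X I p \<le> V_contr M X J q"
      and h3: "rho_contr M X T J q < rho_contr M X T I p \<or> V_contr M X I p < V_contr M X J q"
    have "S - CT J + q \<le> S" using h1 rc[OF J] rI by simp
    moreover have "p - integral\<^sup>L M (\<lambda>\<omega>. I (X \<omega>)) \<le> q - integral\<^sup>L M (\<lambda>\<omega>. J (X \<omega>))"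
      using h2 by (simp add: V_contr_def)
    moreover have "S - CT J + q < S \<or> p - integral\<^sup>L M (\<lambda>\<omega>. I (X \<omega>)) < q - integral\<^sup>L M (\<lambda>\<omega>. J (X \<omega>))"
      using h3 rc[OF J] rI by (simp add: V_contr_def)
    ultimately show False using lead[OF J] by linarith
  qed
  show ?thesis using IR PO rI r00 unfolding p_def by simp
qed

end
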